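(* Assume a common outcome monotonic cost $c$ for both groups, with likelihood cost $c_L$ differentiable in its first argument and satisfying the likelihood condition: $\partial c_L(l,\tau)/\partial l$ is monotonically non-increasing in $\tau$ for $l,\tau\in[0,1]$. If group $b$ is disadvantaged in features compared to group $a$, then for thresholds $\tau\in(0,1]$ the social gap $\mathcal G(\tau)$ is positive and monotonically (strictly) increasing in $\tau$.
   Context: Individuals have features $x\in\mathcal X$, label $y\in\{0,1\}$ and group $g\in\{a,b\}$, with $(X,Y,G)$ jointly distributed. Outcome likelihood $\ell(x)=\Pr[Y=1\mid X=x]>0$ for all $x$. Outcome monotonic cost $c$: for all $x,x',x^*$, (i) $c(x,x')>0$ iff $\ell(x')>\ell(x)$; (ii) $c(x,x^* )>c(x',x^* )>0$ iff $\ell(x^* )>\ell(x')>\ell(x)$; (iii) $c(x,x^* )>c(x,x')>0$ iff $\ell(x^* )>\ell(x')>\ell(x)$; such a cost can be written $c(x,x')=c_L(\ell(x),\ell(x'))$ for a function $c_L$ on likelihoods. Threshold classifier $f_\tau(x)=\mathbf 1[\ell(x)\ge\tau]$. Group social burden $\mathcal B_g(\tau)=\mathbb E[\min_{x':f_\tau(x')=1}c(X,x')\mid Y=1,G=g]$; social gap $\mathcal G(\tau)=\mathcal B_b(\tau)-\mathcal B_a(\tau)$. Let $L_g$ be the random variable $\ell(X)$ conditional on $Y=1,G=g$, with CDF $F_g$. Group $b$ is disadvantaged in features if $F_b(l)>F_a(l)$ for all $l\in(0,1)$. *)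

theory Defs
  imports "HOL-Probability.Probability"
begin

text \<open>Features live in the type 'x; lik is the outcome likelihood Pr[Y=1 | X=x].\<close>

definition outcome_monotonic :: "('x \<Rightarrow> real) \<Rightarrow> ('x \<Rightarrow> 'x \<Rightarrow> real) \<Rightarrow> bool" where
  "outcome_monotonic lik c \<longleftrightarrow>
     (\<forall>x x'. c x x' > 0 \<longleftrightarrow> lik x' > lik x) \<and>
     (\<forall>x x' xs. (c x xs > c x' xs \<and> c x' xs > 0) \<longleftrightarrow> (lik xs > lik x' \<and> lik x' > lik x)) \<and>
     (\<forall>x x' xs. (c x xs > c x x' \<and> c x x' > 0) \<longleftrightarrow> (lik xs > lik x' \<and> lik x' > lik x))"

definition thr_clf :: "('x \<Rightarrow> real) \<Rightarrow> real \<Rightarrow> 'x \<Rightarrow> bool" where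
  "thr_clf lik \<tau> x \<longleftrightarrow> lik x \<ge> \<tau>"

definition min_cost :: "('x \<Rightarrow> real) \<Rightarrow> ('x \<Rightarrow> 'x \<Rightarrow> real) \<Rightarrow> real \<Rightarrow> 'x \<Rightarrow> real" where
  "min_cost lik c \<tau> x = (INF x'\<in>{x'. thr_clf lik \<tau> x'}. c x x')"

text \<open>Social burden of a group, where M is the distribution of X conditional on Y=1, G=g.\<close>
definition burden :: "'x measure \<Rightarrow> ('x \<Rightarrow> real) \<Rightarrow> ('x \<Rightarrow> 'x \<Rightarrow> real) \<Rightarrow> real \<Rightarrow> real" where
  "burden M lik c \<tau> = (\<integral>x. min_cost lik c \<tau> x \<partial>M)"

definition social_gap :: "'x measure \<Rightarrow> 'x measure \<Rightarrow> ('x \<Rightarrow> real) \<Rightarrow> ('x \<Rightarrow> 'x \<Rightarrow> real) \<Rightarrow> real \<Rightarrow> real" where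
  "social_gap Ma Mb lik c \<tau> = burden Mb lik c \<tau> - burden Ma lik c \<tau>"

text \<open>CDF of L_g = l(X) conditional on Y=1, G=g.\<close>
definition lik_cdf :: "'x measure \<Rightarrow> ('x \<Rightarrow> real) \<Rightarrow> real \<Rightarrow> real" where
  "lik_cdf M lik l = measure M {x \<in> space M. lik x \<le> l}"

end

theory Submission
  imports Defs
begin

lemma seg_lemma:
  fixes \<psi> :: "real \<Rightarrow> real" and t :: real
  assumes cont: "continuous_on {0<..1} \<psi>"
    and anti: "\<And>l l'. 0 < l \<Longrightarrow> l \<le> l' \<Longrightarrow> l' \<le> 1 \<Longrightarrow> \<psi> l' \<le> \<psi> l"
    and t1: "\<psi> 1 < t"
    and ne: "l0 \<in> {0<..1}" "t \<le> \<psi> l0"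
  shows "\<exists>s\<in>{0<..<1}. \<forall>l\<in>{0<..1}. (t \<le> \<psi> l \<longleftrightarrow> l \<le> s)"
proof -
  define S where "S = {l\<in>{0<..1}. t \<le> \<psi> l}"
  define s where "s = Sup S"
  have l0S: "l0 \<in> S" using ne by (auto simp: S_def)
  have bdd: "bdd_above S" by (auto simp: S_def bdd_above_def)
  have ub: "\<And>l. l \<in> S \<Longrightarrow> l \<le> s" unfolding s_def using bdd by (rule cSup_upper[rotated])
  have s_le1: "s \<le> 1" unfolding s_def using l0S by (intro cSup_least) (auto simp: S_def)
  have s_pos: "0 < s" using ub[OF l0S] ne by auto
  have ts: "t \<le> \<psi> s"
  proof (rule ccontr)
    assume "\<not> t \<le> \<psi> s"
    hence lt: "\<psi> s < t" by simp
    have "s \<in> {0<..1}" using s_pos s_le1 by auto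
    with cont have "continuous (at s within {0<..1}) \<psi>"
      using continuous_on_eq_continuous_within by blast
    moreover have "t - \<psi> s > 0" using lt by simp
    ultimately have "\<exists>d>0. \<forall>y\<in>{0<..1}. dist y s < d \<longrightarrow> dist (\<psi> y) (\<psi> s) < t - \<psi> s"
      unfolding continuous_within_eps_delta by blast
    then obtain d where d: "d > 0" "\<forall>y\<in>{0<..1}. dist y s < d \<longrightarrow> dist (\<psi> y) (\<psi> s) < t - \<psi> s"
      by (elim exE conjE)
    obtain l where l: "l \<in> S" "s - d < l"
    proof -
      have "S \<noteq> {}" using l0S by auto
      moreover have "s - d < Sup S" using d(1) unfolding s_def by simp
      ultimately show ?thesis using less_cSupE[of "s - d" S] that unfolding s_def by blast
    qed
    have "dist l s < d" using l ub[OF l(1)] by (simp add: dist_real_def)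
    moreover have "l \<in> {0<..1}" using l by (auto simp: S_def)
    ultimately have "\<psi> l < t" using d(2) by (simp add: dist_real_def abs_less_iff)
    thus False using l by (auto simp: S_def)
  qed
  have s1: "s < 1" using ts t1 s_le1 by (cases "s = 1") auto
  show ?thesis
  proof (intro bexI ballI)
    fix l :: real assume l: "l \<in> {0<..1}"
    show "t \<le> \<psi> l \<longleftrightarrow> l \<le> s"
    proof
      assume "t \<le> \<psi> l" thus "l \<le> s" using l ub by (auto simp: S_def)
    next
      assume "l \<le> s" thus "t \<le> \<psi> l" using anti[of l s] l ts s_le1 by auto
    qed
  qed (use s_pos s1 in auto)
qed

lemma layer_cake:
  fixes h :: "'x \<Rightarrow> real"
  assumes M: "prob_space M" and hm[measurable]: "h \<in> borel_measurable M"
    and hpos: "\<And>x. x \<in> space M \<Longrightarrow> 0 \<le> h x"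
  shows "(\<integral>\<^sup>+x. ennreal (h x) \<partial>M) =
         (\<integral>\<^sup>+t. indicator {0<..} t * emeasure M {x\<in>space M. t \<le> h x} \<partial>lborel)"
proof -
  interpret M: prob_space M by (rule M)
  interpret P: pair_sigma_finite M lborel
    unfolding pair_sigma_finite_def using M.sigma_finite_measure_axioms lborel.sigma_finite_measure_axioms by auto
  define f where "f x t = indicator {0<..} t * (if t \<le> h x then 1 else (0::ennreal))" for x t
  have fm: "case_prod f \<in> borel_measurable (M \<Otimes>\<^sub>M lborel)"
    unfolding f_def by measurable
  have F: "(\<integral>\<^sup>+t. (\<integral>\<^sup>+x. f x t \<partial>M) \<partial>lborel) = (\<integral>\<^sup>+x. (\<integral>\<^sup>+t. f x t \<partial>lborel) \<partial>M)"
    by (rule P.Fubini'[OF fm])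
  have A: "\<And>t. (\<integral>\<^sup>+x. f x t \<partial>M) = indicator {0<..} t * emeasure M {x\<in>space M. t \<le> h x}"
  proof -
    fix t
    have "(\<integral>\<^sup>+x. f x t \<partial>M) = (\<integral>\<^sup>+x. indicator {0<..} t * indicator {x\<in>space M. t \<le> h x} x \<partial>M)"
      by (rule nn_integral_cong) (auto simp: f_def indicator_def)
    also have "\<dots> = indicator {0<..} t * emeasure M {x\<in>space M. t \<le> h x}"
      by (subst nn_integral_cmult_indicator) auto
    finally show "(\<integral>\<^sup>+x. f x t \<partial>M) = indicator {0<..} t * emeasure M {x\<in>space M. t \<le> h x}" .
  qed
  have B: "\<And>x. x \<in> space M \<Longrightarrow> (\<integral>\<^sup>+t. f x t \<partial>lborel) = ennreal (h x)"
  proof -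
    fix x assume x: "x \<in> space M"
    have "(\<integral>\<^sup>+t. f x t \<partial>lborel) = (\<integral>\<^sup>+t. indicator {0<..h x} t \<partial>lborel)"
      by (rule nn_integral_cong) (auto simp: f_def indicator_def)
    also have "\<dots> = ennreal (h x)" using hpos[OF x] by simp
    finally show "(\<integral>\<^sup>+t. f x t \<partial>lborel) = ennreal (h x)" .
  qed
  have "(\<integral>\<^sup>+x. ennreal (h x) \<partial>M) = (\<integral>\<^sup>+x. (\<integral>\<^sup>+t. f x t \<partial>lborel) \<partial>M)"
    by (rule nn_integral_cong) (simp add: B)
  also have "\<dots> = (\<integral>\<^sup>+t. (\<integral>\<^sup>+x. f x t \<partial>M) \<partial>lborel)" using F by simp
  also have "\<dots> = (\<integral>\<^sup>+t. indicator {0<..} t * emeasure M {x\<in>space M. t \<le> h x} \<partial>lborel)"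
    by (simp add: A)
  finally show ?thesis .
qed

lemma layer_meas:
  fixes h :: "'x \<Rightarrow> real"
  assumes M: "prob_space M" and hm[measurable]: "h \<in> borel_measurable M"
  shows "(\<lambda>t. indicator {0<..} t * emeasure M {x\<in>space M. t \<le> h x}) \<in> borel_measurable lborel"
proof -
  interpret M: prob_space M by (rule M)
  define f where "f t x = indicator {0<..} t * (if t \<le> h x then 1 else (0::ennreal))" for x t
  have fm: "case_prod f \<in> borel_measurable (lborel \<Otimes>\<^sub>M M)"
    unfolding f_def by measurable
  have A: "\<And>t. (\<integral>\<^sup>+x. f t x \<partial>M) = indicator {0<..} t * emeasure M {x\<in>space M. t \<le> h x}"
  proof -
    fix t
    have "(\<integral>\<^sup>+x. f t x \<partial>M) = (\<integral>\<^sup>+x. indicator {0<..} t * indicator {x\<in>space M. t \<le> h x} x \<partial>M)"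
      by (rule nn_integral_cong) (auto simp: f_def indicator_def)
    also have "\<dots> = indicator {0<..} t * emeasure M {x\<in>space M. t \<le> h x}"
      by (subst nn_integral_cmult_indicator) auto
    finally show "(\<integral>\<^sup>+x. f t x \<partial>M) = indicator {0<..} t * emeasure M {x\<in>space M. t \<le> h x}" .
  qed
  have "(\<lambda>t. \<integral>\<^sup>+x. f t x \<partial>M) \<in> borel_measurable lborel"
    by (rule M.borel_measurable_nn_integral[OF fm])
  then show ?thesis by (simp add: A)
qed

lemma integrable_comp:
  fixes lik :: "'x \<Rightarrow> real" and \<phi> :: "real \<Rightarrow> real"
  assumes M: "prob_space M" and lm[measurable]: "lik \<in> borel_measurable M"
    and rng: "\<forall>x. 0 < lik x \<and> lik x \<le> 1"
    and cont: "continuous_on {0..1} \<phi>"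
  shows "integrable M (\<lambda>x. \<phi> (lik x))"
proof -
  interpret M: prob_space M by (rule M)
  define \<phi>c where "\<phi>c l = \<phi> (max 0 (min 1 l))" for l
  have "continuous_on UNIV \<phi>c"
    unfolding \<phi>c_def
    by (rule continuous_on_compose2[OF cont]) (auto intro!: continuous_intros)
  hence [measurable]: "\<phi>c \<in> borel_measurable borel" by (rule borel_measurable_continuous_onI)
  have eq: "\<And>x. \<phi> (lik x) = \<phi>c (lik x)" using rng unfolding \<phi>c_def
    by (metis less_eq_real_def max.absorb2 min.absorb2)
  have "bounded (\<phi> ` {0..1})" using compact_continuous_image[OF cont compact_Icc] compact_imp_bounded by blast
  then obtain B where B: "\<forall>y\<in>\<phi> ` {0..1}. norm y \<le> B" unfolding bounded_iff by blast
  show ?thesis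
  proof (rule M.integrable_const_bound[where B=B])
    show "AE x in M. norm (\<phi> (lik x)) \<le> B" using B rng by (auto intro!: AE_I2 simp: less_imp_le)
    show "(\<lambda>x. \<phi> (lik x)) \<in> borel_measurable M" unfolding eq by measurable
  qed
qed

lemma dominance:
  fixes lik :: "'x \<Rightarrow> real" and \<phi> :: "real \<Rightarrow> real"
  assumes Ma: "prob_space Ma" and Mb: "prob_space Mb"
    and la[measurable]: "lik \<in> borel_measurable Ma" and lb[measurable]: "lik \<in> borel_measurable Mb"
    and rng: "\<forall>x. 0 < lik x \<and> lik x \<le> 1"
    and disadv: "\<forall>l\<in>{0<..<1}. lik_cdf Mb lik l > lik_cdf Ma lik l"
    and cont: "continuous_on {0..1} \<phi>"
    and anti: "\<And>l l'. 0 < l \<Longrightarrow> l \<le> l' \<Longrightarrow> l' \<le> 1 \<Longrightarrow> \<phi> l' \<le> \<phi> l"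
    and l0: "l0 \<in> {0<..1}" "\<phi> 1 < \<phi> l0"
  shows "(\<integral>x. \<phi> (lik x) \<partial>Ma) < (\<integral>x. \<phi> (lik x) \<partial>Mb)"
proof -
  interpret A: prob_space Ma by (rule Ma)
  interpret B: prob_space Mb by (rule Mb)
  define \<psi> where "\<psi> l = \<phi> l - \<phi> 1" for l
  have contp: "continuous_on {0<..1} \<psi>" unfolding \<psi>_def
    by (intro continuous_intros continuous_on_subset[OF cont]) auto
  have antip: "\<And>l l'. 0 < l \<Longrightarrow> l \<le> l' \<Longrightarrow> l' \<le> 1 \<Longrightarrow> \<psi> l' \<le> \<psi> l"
    unfolding \<psi>_def using anti by fastforce
  have ia: "integrable Ma (\<lambda>x. \<phi> (lik x))" by (rule integrable_comp[OF Ma la rng cont])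
  have ib: "integrable Mb (\<lambda>x. \<phi> (lik x))" by (rule integrable_comp[OF Mb lb rng cont])
  have iha: "integrable Ma (\<lambda>x. \<psi> (lik x))" unfolding \<psi>_def using ia by auto
  have ihb: "integrable Mb (\<lambda>x. \<psi> (lik x))" unfolding \<psi>_def using ib by auto
  have hpos: "\<And>x. 0 \<le> \<psi> (lik x)" using antip[of "lik x" 1 for x] rng by (simp add: \<psi>_def)
  have ea: "(\<integral>x. \<psi> (lik x) \<partial>Ma) = (\<integral>x. \<phi> (lik x) \<partial>Ma) - \<phi> 1"
    unfolding \<psi>_def using ia by (simp add: A.prob_space)
  have eb: "(\<integral>x. \<psi> (lik x) \<partial>Mb) = (\<integral>x. \<phi> (lik x) \<partial>Mb) - \<phi> 1"
    unfolding \<psi>_def using ib by (simp add: B.prob_space)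
  have hma[measurable]: "(\<lambda>x. \<psi> (lik x)) \<in> borel_measurable Ma" using iha by auto
  have hmb[measurable]: "(\<lambda>x. \<psi> (lik x)) \<in> borel_measurable Mb" using ihb by auto
  define Pa where "Pa t = indicator {0<..} t * emeasure Ma {x\<in>space Ma. t \<le> \<psi> (lik x)}" for t
  define Pb where "Pb t = indicator {0<..} t * emeasure Mb {x\<in>space Mb. t \<le> \<psi> (lik x)}" for t
  have key: "\<And>t. 0 < t \<Longrightarrow> Pa t \<le> Pb t \<and> (t \<le> \<psi> l0 \<longrightarrow> Pa t < Pb t)"
  proof -
    fix t :: real assume t: "0 < t"
    have p1: "\<psi> 1 < t" using t by (simp add: \<psi>_def)
    show "Pa t \<le> Pb t \<and> (t \<le> \<psi> l0 \<longrightarrow> Pa t < Pb t)"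
    proof (cases "\<exists>l\<in>{0<..1}. t \<le> \<psi> l")
      case False
      hence "\<And>x. \<not> t \<le> \<psi> (lik x)" using rng by auto
      moreover have "\<not> t \<le> \<psi> l0" using False l0 by auto
      ultimately show ?thesis by (simp add: Pa_def Pb_def)
    next
      case True
      then obtain l1 where l1: "l1 \<in> {0<..1}" "t \<le> \<psi> l1" by auto
      obtain s where s: "s \<in> {0<..<1}" "\<forall>l\<in>{0<..1}. (t \<le> \<psi> l \<longleftrightarrow> l \<le> s)"
        using seg_lemma[OF contp antip p1 l1] by blast
      have "\<And>x. t \<le> \<psi> (lik x) \<longleftrightarrow> lik x \<le> s" using s(2) rng by auto
      hence "Pa t = ennreal (lik_cdf Ma lik s)" "Pb t = ennreal (lik_cdf Mb lik s)"
        using t by (simp_all add: Pa_def Pb_def lik_cdf_def A.emeasure_eq_measure B.emeasure_eq_measure)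
      moreover have "lik_cdf Ma lik s < lik_cdf Mb lik s" using disadv s(1) by auto
      moreover have "0 \<le> lik_cdf Ma lik s" by (simp add: lik_cdf_def)
      ultimately show ?thesis by (simp add: ennreal_less_iff)
    qed
  qed
  have pl0: "0 < \<psi> l0" using l0 by (simp add: \<psi>_def)
  have na: "(\<integral>\<^sup>+x. ennreal (\<psi> (lik x)) \<partial>Ma) = ennreal (\<integral>x. \<psi> (lik x) \<partial>Ma)"
    using iha hpos by (intro nn_integral_eq_integral) auto
  have nb: "(\<integral>\<^sup>+x. ennreal (\<psi> (lik x)) \<partial>Mb) = ennreal (\<integral>x. \<psi> (lik x) \<partial>Mb)"
    using ihb hpos by (intro nn_integral_eq_integral) auto
  have la': "(\<integral>\<^sup>+x. ennreal (\<psi> (lik x)) \<partial>Ma) = (\<integral>\<^sup>+t. Pa t \<partial>lborel)"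
    unfolding Pa_def by (rule layer_cake[OF Ma hma]) (simp add: hpos)
  have lb': "(\<integral>\<^sup>+x. ennreal (\<psi> (lik x)) \<partial>Mb) = (\<integral>\<^sup>+t. Pb t \<partial>lborel)"
    unfolding Pb_def by (rule layer_cake[OF Mb hmb]) (simp add: hpos)
  have "(\<integral>\<^sup>+t. Pa t \<partial>lborel) < (\<integral>\<^sup>+t. Pb t \<partial>lborel)"
  proof (rule nn_integral_less)
    show "Pa \<in> borel_measurable lborel" unfolding Pa_def by (rule layer_meas[OF Ma hma])
    show "Pb \<in> borel_measurable lborel" unfolding Pb_def by (rule layer_meas[OF Mb hmb])
    show "(\<integral>\<^sup>+t. Pa t \<partial>lborel) \<noteq> \<infinity>" using la' na by (metis ennreal_neq_top infinity_ennreal_def)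
    show "AE t in lborel. Pa t \<le> Pb t"
    proof (rule AE_I2)
      fix t :: real
      show "Pa t \<le> Pb t"
      proof (cases "0 < t")
        case True thus ?thesis using key by blast
      qed (simp add: Pa_def Pb_def)
    qed
    show "\<not> (AE t in lborel. Pb t \<le> Pa t)"
    proof
      assume "AE t in lborel. Pb t \<le> Pa t"
      then obtain N where N: "{t \<in> space lborel. \<not> Pb t \<le> Pa t} \<subseteq> N" "emeasure lborel N = 0" "N \<in> sets lborel"
        by (rule AE_E)
      have "{0<..\<psi> l0} \<subseteq> N" using N(1) key by (force simp: not_le)
      hence "emeasure lborel {0<..\<psi> l0} \<le> emeasure lborel N" by (intro emeasure_mono N(3))
      thus False using N(2) pl0 by simp
    qed
  qed
  hence "ennreal (\<integral>x. \<psi> (lik x) \<partial>Ma) < ennreal (\<integral>x. \<psi> (lik x) \<partial>Mb)"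
    using la' lb' na nb by simp
  moreover have "0 \<le> (\<integral>x. \<psi> (lik x) \<partial>Ma)" using hpos by simp
  ultimately have "(\<integral>x. \<psi> (lik x) \<partial>Ma) < (\<integral>x. \<psi> (lik x) \<partial>Mb)" by (simp add: ennreal_less_iff)
  thus ?thesis using ea eb by simp
qed

lemma deriv_interior:
  assumes "(f has_real_derivative D) (at x within {0..1})" "0 < x" "x < (1::real)"
  shows "(f has_real_derivative D) (at x)"
proof -
  have "(f has_real_derivative D) (at x within {0<..<1})"
    by (rule DERIV_subset[OF assms(1)]) auto
  thus ?thesis using at_within_open[of x "{0<..<1::real}"] assms(2,3) by simp
qed

theorem theorem2:
  fixes lik :: "'x \<Rightarrow> real"
    and c :: "'x \<Rightarrow> 'x \<Rightarrow> real"
    and cL cL' :: "real \<Rightarrow> real \<Rightarrow> real"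
    and Ma Mb :: "'x measure"
  assumes lik_range: "\<forall>x. 0 < lik x \<and> lik x \<le> 1"
    and lik_rich: "\<forall>\<tau>\<in>{0<..1}. \<exists>x. lik x = \<tau>"
    and prob_a: "prob_space Ma" and prob_b: "prob_space Mb"
    and meas_a: "lik \<in> borel_measurable Ma" and meas_b: "lik \<in> borel_measurable Mb"
    and cost_nonneg: "\<forall>x x'. 0 \<le> c x x'"
    and mono: "outcome_monotonic lik c"
    and cL: "\<forall>x x'. c x x' = cL (lik x) (lik x')"
    and cL_deriv: "\<forall>l\<in>{0..1}. \<forall>\<tau>\<in>{0..1}.
                     ((\<lambda>u. cL u \<tau>) has_real_derivative cL' l \<tau>) (at l within {0..1})"
    and lik_cond: "\<forall>l\<in>{0..1}. \<forall>\<tau>1\<in>{0..1}. \<forall>\<tau>2\<in>{0..1}. \<tau>1 \<le> \<tau>2 \<longrightarrow> cL' l \<tau>2 \<le> cL' l \<tau>1"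
    and disadv: "\<forall>l\<in>{0<..<1}. lik_cdf Mb lik l > lik_cdf Ma lik l"
  shows "(\<forall>\<tau>\<in>{0<..1}. social_gap Ma Mb lik c \<tau> > 0) \<and>
         strict_mono_on {0<..1} (social_gap Ma Mb lik c)"
proof -
  have m1: "\<And>x x'. c x x' > 0 \<longleftrightarrow> lik x' > lik x"
    and m2: "\<And>x x' xs. (c x xs > c x' xs \<and> c x' xs > 0) \<longleftrightarrow> (lik xs > lik x' \<and> lik x' > lik x)"
    and m3: "\<And>x x' xs. (c x xs > c x x' \<and> c x x' > 0) \<longleftrightarrow> (lik xs > lik x' \<and> lik x' > lik x)"
    using mono unfolding outcome_monotonic_def by blast+
  obtain pre where pre: "\<And>l. l \<in> {0<..1} \<Longrightarrow> lik (pre l) = l"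
    using lik_rich by metis
  have cLc: "\<And>l l'. l \<in> {0<..1} \<Longrightarrow> l' \<in> {0<..1} \<Longrightarrow> cL l l' = c (pre l) (pre l')"
    using cL pre by simp
  have P0: "\<And>l \<tau>. l \<in> {0<..1} \<Longrightarrow> \<tau> \<in> {0<..1} \<Longrightarrow> \<tau> \<le> l \<Longrightarrow> cL l \<tau> = 0"
  proof -
    fix l \<tau> :: real assume a: "l \<in> {0<..1}" "\<tau> \<in> {0<..1}" "\<tau> \<le> l"
    have "\<not> c (pre l) (pre \<tau>) > 0" using m1 pre a by auto
    thus "cL l \<tau> = 0" using cLc[OF a(1,2)] cost_nonneg by (metis order_less_le)
  qed
  have P1: "\<And>l \<tau>. l \<in> {0<..1} \<Longrightarrow> \<tau> \<in> {0<..1} \<Longrightarrow> l < \<tau> \<Longrightarrow> 0 < cL l \<tau>"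
    using m1 pre cLc by auto
  have P2: "\<And>l l' \<tau>. 0 < l \<Longrightarrow> l < l' \<Longrightarrow> l' < \<tau> \<Longrightarrow> \<tau> \<le> 1 \<Longrightarrow> cL l' \<tau> < cL l \<tau>"
  proof -
    fix l l' \<tau> :: real assume a: "0 < l" "l < l'" "l' < \<tau>" "\<tau> \<le> 1"
    have "lik (pre \<tau>) > lik (pre l') \<and> lik (pre l') > lik (pre l)" using pre a by auto
    hence "c (pre l) (pre \<tau>) > c (pre l') (pre \<tau>)" using m2 by blast
    thus "cL l' \<tau> < cL l \<tau>" using cLc a by auto
  qed
  have Pnn: "\<And>l \<tau>. l \<in> {0<..1} \<Longrightarrow> \<tau> \<in> {0<..1} \<Longrightarrow> 0 \<le> cL l \<tau>"
    using cLc cost_nonneg by simp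
  have anti1: "\<And>\<tau> l l'. \<tau> \<in> {0<..1} \<Longrightarrow> 0 < l \<Longrightarrow> l \<le> l' \<Longrightarrow> l' \<le> 1 \<Longrightarrow> cL l' \<tau> \<le> cL l \<tau>"
  proof -
    fix \<tau> l l' :: real assume a: "\<tau> \<in> {0<..1}" "0 < l" "l \<le> l'" "l' \<le> 1"
    show "cL l' \<tau> \<le> cL l \<tau>"
    proof (cases "l = l'")
      case False
      show ?thesis
      proof (cases "\<tau> \<le> l'")
        case True thus ?thesis using P0[of l' \<tau>] Pnn[of l \<tau>] a by auto
      next
        case False thus ?thesis using P2[of l l' \<tau>] a \<open>l \<noteq> l'\<close> by auto
      qed
    qed simp
  qed
  have mc: "\<And>\<tau> x. \<tau> \<in> {0<..1} \<Longrightarrow> min_cost lik c \<tau> x = cL (lik x) \<tau>"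
  proof -
    fix \<tau> :: real and x assume t: "\<tau> \<in> {0<..1}"
    let ?xs = "pre \<tau>"
    have xs: "lik ?xs = \<tau>" using pre t by simp
    have le: "\<And>x'. lik x' \<ge> \<tau> \<Longrightarrow> c x ?xs \<le> c x x'"
    proof -
      fix x' assume x': "lik x' \<ge> \<tau>"
      show "c x ?xs \<le> c x x'"
      proof (cases "lik x \<ge> \<tau>")
        case True
        hence "\<not> c x ?xs > 0" using m1 xs by auto
        thus ?thesis using cost_nonneg by (meson not_le order_trans)
      next
        case False
        show ?thesis
        proof (cases "lik x' = \<tau>")
          case True thus ?thesis using cL xs by simp
        next
          case False
          hence "lik x' > lik ?xs \<and> lik ?xs > lik x" using x' xs \<open>\<not> lik x \<ge> \<tau>\<close> by auto
          hence "c x x' > c x ?xs" using m3 by blast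
          thus ?thesis by simp
        qed
      qed
    qed
    have "min_cost lik c \<tau> x = c x ?xs"
      unfolding min_cost_def thr_clf_def
    proof (rule antisym)
      show "(INF x'\<in>{x'. \<tau> \<le> lik x'}. c x x') \<le> c x ?xs"
        by (rule cINF_lower) (auto simp: xs bdd_below_def intro!: exI[of _ 0] cost_nonneg[rule_format])
      show "c x ?xs \<le> (INF x'\<in>{x'. \<tau> \<le> lik x'}. c x x')"
        by (rule cINF_greatest) (use xs le in \<open>auto intro!: exI[of _ ?xs]\<close>)
    qed
    thus "min_cost lik c \<tau> x = cL (lik x) \<tau>" using cL xs by simp
  qed
  have gap: "\<And>\<tau>. \<tau> \<in> {0<..1} \<Longrightarrow> social_gap Ma Mb lik c \<tau> = (\<integral>x. cL (lik x) \<tau> \<partial>Mb) - (\<integral>x. cL (lik x) \<tau> \<partial>Ma)"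
  proof -
    fix \<tau> :: real assume "\<tau> \<in> {0<..1}"
    hence "min_cost lik c \<tau> = (\<lambda>x. cL (lik x) \<tau>)" using mc by auto
    thus "social_gap Ma Mb lik c \<tau> = (\<integral>x. cL (lik x) \<tau> \<partial>Mb) - (\<integral>x. cL (lik x) \<tau> \<partial>Ma)"
      unfolding social_gap_def burden_def by simp
  qed
  have contL: "\<And>\<tau>. \<tau> \<in> {0..1} \<Longrightarrow> continuous_on {0..1} (\<lambda>u. cL u \<tau>)"
  proof -
    fix \<tau> :: real assume t: "\<tau> \<in> {0..1}"
    show "continuous_on {0..1} (\<lambda>u. cL u \<tau>)"
      unfolding continuous_on_eq_continuous_within
    proof
      fix l :: real assume "l \<in> {0..1}"
      hence "((\<lambda>u. cL u \<tau>) has_real_derivative cL' l \<tau>) (at l within {0..1})"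
        using cL_deriv t by blast
      thus "continuous (at l within {0..1}) (\<lambda>u. cL u \<tau>)" by (rule DERIV_continuous)
    qed
  qed
  have intg: "\<And>\<tau> M. \<tau> \<in> {0..1} \<Longrightarrow> prob_space M \<Longrightarrow> lik \<in> borel_measurable M \<Longrightarrow> integrable M (\<lambda>x. cL (lik x) \<tau>)"
    using integrable_comp[OF _ _ lik_range contL] by blast
  have pos: "\<forall>\<tau>\<in>{0<..1}. social_gap Ma Mb lik c \<tau> > 0"
  proof
    fix \<tau> :: real assume t: "\<tau> \<in> {0<..1}"
    have "(\<integral>x. cL (lik x) \<tau> \<partial>Ma) < (\<integral>x. cL (lik x) \<tau> \<partial>Mb)"
    proof (rule dominance[OF prob_a prob_b meas_a meas_b lik_range disadv])
      show "continuous_on {0..1} (\<lambda>u. cL u \<tau>)" using contL t by auto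
      show "\<And>l l'. 0 < l \<Longrightarrow> l \<le> l' \<Longrightarrow> l' \<le> 1 \<Longrightarrow> cL l' \<tau> \<le> cL l \<tau>" using anti1 t by blast
      show "\<tau>/2 \<in> {0<..1}" using t by auto
      show "cL 1 \<tau> < cL (\<tau>/2) \<tau>" using P0[of 1 \<tau>] P1[of "\<tau>/2" \<tau>] t by auto
    qed
    thus "social_gap Ma Mb lik c \<tau> > 0" using gap[OF t] by simp
  qed
  have smono: "strict_mono_on {0<..1} (social_gap Ma Mb lik c)"
  proof (rule strict_mono_onI)
    fix \<tau>1 \<tau>2 :: real assume t1: "\<tau>1 \<in> {0<..1}" and t2: "\<tau>2 \<in> {0<..1}" and lt: "\<tau>1 < \<tau>2"
    define \<phi> where "\<phi> l = cL l \<tau>2 - cL l \<tau>1" for l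
    have cphi: "continuous_on {0..1} \<phi>" unfolding \<phi>_def
        using contL t1 t2 by (intro continuous_on_diff) auto
    have "(\<integral>x. \<phi> (lik x) \<partial>Ma) < (\<integral>x. \<phi> (lik x) \<partial>Mb)"
    proof (rule dominance[OF prob_a prob_b meas_a meas_b lik_range disadv])
      show "continuous_on {0..1} \<phi>" by (rule cphi)
      show "\<And>l l'. 0 < l \<Longrightarrow> l \<le> l' \<Longrightarrow> l' \<le> 1 \<Longrightarrow> \<phi> l' \<le> \<phi> l"
      proof -
        fix l l' :: real assume a: "0 < l" "l \<le> l'" "l' \<le> 1"
        show "\<phi> l' \<le> \<phi> l"
        proof (rule DERIV_nonpos_imp_decreasing_open[OF a(2)])
          fix y assume y: "l < y" "y < l'"
          have d2: "((\<lambda>u. cL u \<tau>2) has_real_derivative cL' y \<tau>2) (at y)"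
            using cL_deriv t2 y a by (intro deriv_interior) auto
          have d1: "((\<lambda>u. cL u \<tau>1) has_real_derivative cL' y \<tau>1) (at y)"
            using cL_deriv t1 y a by (intro deriv_interior) auto
          have "(\<phi> has_real_derivative (cL' y \<tau>2 - cL' y \<tau>1)) (at y)"
            unfolding \<phi>_def using DERIV_diff[OF d2 d1] .
          moreover have "cL' y \<tau>2 - cL' y \<tau>1 \<le> 0" using lik_cond t1 t2 lt y a by auto
          ultimately show "\<exists>D. (\<phi> has_real_derivative D) (at y) \<and> D \<le> 0" by blast
        next
          show "continuous_on {l..l'} \<phi>"
            by (rule continuous_on_subset[OF cphi]) (use a in auto)
        qed
      qed
      show "\<tau>1 \<in> {0<..1}" using t1 .
      show "\<phi> 1 < \<phi> \<tau>1" unfolding \<phi>_def using P0[of 1 \<tau>1] P0[of 1 \<tau>2] P0[of \<tau>1 \<tau>1] P1[of \<tau>1 \<tau>2] t1 t2 lt by auto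
    qed
    moreover have "(\<integral>x. \<phi> (lik x) \<partial>Ma) = (\<integral>x. cL (lik x) \<tau>2 \<partial>Ma) - (\<integral>x. cL (lik x) \<tau>1 \<partial>Ma)"
      unfolding \<phi>_def by (rule Bochner_Integration.integral_diff; rule intg[OF _ prob_a meas_a]) (use t1 t2 in auto)
    moreover have "(\<integral>x. \<phi> (lik x) \<partial>Mb) = (\<integral>x. cL (lik x) \<tau>2 \<partial>Mb) - (\<integral>x. cL (lik x) \<tau>1 \<partial>Mb)"
      unfolding \<phi>_def by (rule Bochner_Integration.integral_diff; rule intg[OF _ prob_b meas_b]) (use t1 t2 in auto)
    ultimately show "social_gap Ma Mb lik c \<tau>1 < social_gap Ma Mb lik c \<tau>2"
      using gap[OF t1] gap[OF t2] by simp
  qed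
  show ?thesis using pos smono by blast
qed

end
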